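(* Let $R$ be a ranking profile over $m$ candidates and let $\rhd=x_1,\dots,x_m$ be the ranking chosen by the Ranked Method of Equal Shares. Then for all $i\in\{1,\dots,\lfloor m/4\rfloor\}$, $\rho_i=\frac{m-i}{U(b_1,x_i,\{x_i,\dots,x_m\})}$ and $x_i\in\arg\max_{x\in\{x_i,\dots,x_m\}}U(b_1,x,\{x_i,\dots,x_m\})$.
   Context: Let $C$ be a set of $m$ candidates. A ranking is a strict linear order over $C$; $\mathcal{R}$ denotes the set of all rankings over $C$. A ranking profile is a function $R:\mathcal{R}\to[0,1]$ with $\sum_{\succ}R(\succ)=1$. For a ranking $\succ$ and $x\in X\subseteq C$, $u(\succ,x,X)=|\{y\in X\setminus\{x\}: x\succ y\}|$; for $b:\mathcal{R}\to\mathbb{R}_{\geq0}$, $U(b,x,X)=\sum_{\succ}b(\succ)u(\succ,x,X)$. Ranked Method of Equal Shares: set $X_1=C$, $b_1(\succ)=R(\succ)\binom{m}{2}$. In each round $i\in\{1,\dots,m-2\}$, for each $x\in X_i$ let $\rho_x$ be the smallest $\rho\geq0$ with $\sum_{\succ\in\mathcal{R}}\min\big(\rho\,b_1(\succ)u(\succ,x,X_i),\,b_i(\succ),\,u(\succ,x,X_i)\big)=m-i$ ($\rho_x=\infty$ if none exists); choose $x_i$ minimizing $\rho_x$ (ties broken arbitrarily), set $\rho_i=\rho_{x_i}$, place $x_i$ at position $i$, set $X_{i+1}=X_i\setminus\{x_i\}$ and $b_{i+1}(\succ)=b_i(\succ)-\min(\rho_i b_1(\succ)u(\succ,x_i,X_i),b_i(\succ),u(\succ,x_i,X_i))$.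 The last two candidates are ordered by majority with respect to the remaining budgets $b_{m-1}$. *)

theory Defs
  imports "HOL-Combinatorics.Multiset_Permutations" "HOL-Library.Extended_Real"
begin

text \<open>A ranking over the candidate set C is a list enumerating C without repetition
  (first = most preferred); the set of all rankings is permutations_of_set C.\<close>

definition prefers :: "'a list \<Rightarrow> 'a \<Rightarrow> 'a \<Rightarrow> bool" where
  "prefers r x y \<longleftrightarrow> (\<exists>i j. i < j \<and> j < length r \<and> r ! i = x \<and> r ! j = y)"

definition is_profile :: "'a set \<Rightarrow> ('a list \<Rightarrow> real) \<Rightarrow> bool" where
  "is_profile C R \<longleftrightarrow> (\<forall>r\<in>permutations_of_set C. 0 \<le> R r \<and> R r \<le> 1)
     \<and> (\<Sum>r\<in>permutations_of_set C. R r) = 1"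

definition util :: "'a list \<Rightarrow> 'a \<Rightarrow> 'a set \<Rightarrow> real" where
  "util r x X = real (card {y \<in> X - {x}. prefers r x y})"

definition Util :: "'a set \<Rightarrow> ('a list \<Rightarrow> real) \<Rightarrow> 'a \<Rightarrow> 'a set \<Rightarrow> real" where
  "Util C b x X = (\<Sum>r\<in>permutations_of_set C. b r * util r x X)"

text \<open>rho_x: smallest rho \<ge> 0 such that the payment sum equals k (infinity if none).\<close>
definition rho_of :: "'a set \<Rightarrow> ('a list \<Rightarrow> real) \<Rightarrow> ('a list \<Rightarrow> real) \<Rightarrow> nat \<Rightarrow> 'a set \<Rightarrow> 'a \<Rightarrow> ereal" where
  "rho_of C b1 bi k X y = Inf {ereal \<rho> | \<rho>. \<rho> \<ge> 0 \<and>
     (\<Sum>r\<in>permutations_of_set C. min (\<rho> * b1 r * util r y X) (min (bi r) (util r y X))) = real k}"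

text \<open>payment min(rho * b1 * u, b_i, u), with ereal semantics for rho = infinity
  (infinity * 0 = 0).\<close>
definition pay :: "ereal \<Rightarrow> real \<Rightarrow> real \<Rightarrow> real \<Rightarrow> real" where
  "pay \<rho> b1 bi u = (if \<rho> = \<infinity> then (if b1 * u = 0 then 0 else min bi u)
                     else min (real_of_ereal \<rho> * b1 * u) (min bi u))"

text \<open>A run of the Ranked Method of Equal Shares (with some tie-breaking):
  x i is the candidate at position i (1 \<le> i \<le> m), b i the budgets before round i,
  \<rho> i the value rho_i of round i.\<close>
definition rmes_run :: "'a set \<Rightarrow> ('a list \<Rightarrow> real) \<Rightarrow> (nat \<Rightarrow> 'a)
    \<Rightarrow> (nat \<Rightarrow> 'a list \<Rightarrow> real) \<Rightarrow> (nat \<Rightarrow> ereal) \<Rightarrow> bool" where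
  "rmes_run C R x b \<rho> \<longleftrightarrow>
     (let m = card C in
       inj_on x {1..m} \<and> x ` {1..m} = C \<and>
       (\<forall>r. b 1 r = R r * real (m choose 2)) \<and>
       (\<forall>i\<in>{1..m-2}. let X = C - x ` {1..<i} in
          (\<forall>y\<in>X. \<rho> i \<le> rho_of C (b 1) (b i) (m - i) X y) \<and>
          \<rho> i = rho_of C (b 1) (b i) (m - i) X (x i) \<and>
          (\<forall>r. b (Suc i) r = b i r - pay (\<rho> i) (b 1 r) (b i r) (util r (x i) X))) \<and>
       (m \<ge> 2 \<longrightarrow>
          (\<Sum>r\<in>{r\<in>permutations_of_set C. prefers r (x m) (x (m-1))}. b (m-1) r)
          \<le> (\<Sum>r\<in>{r\<in>permutations_of_set C. prefers r (x (m-1)) (x m)}. b (m-1) r)))"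

end

theory Submission
  imports Defs
begin


lemma sum_card_pairs:
  assumes "finite X" "\<forall>a\<in>X. \<forall>b\<in>X. a \<noteq> b \<longrightarrow> (P a b \<longleftrightarrow> \<not> P b a)"
  shows "2 * (\<Sum>a\<in>X. card {b\<in>X-{a}. P a b}) = card X * (card X - 1)"
  using assms
proof (induction X rule: finite_induct)
  case empty then show ?case by simp
next
  case (insert c X)
  have IH: "2 * (\<Sum>a\<in>X. card {b\<in>X-{a}. P a b}) = card X * (card X - 1)"
    using insert by blast
  have e1: "card {b\<in>insert c X-{a}. P a b} = card {b\<in>X-{a}. P a b} + (if P a c then 1 else 0)"
    if "a \<in> X" for a
  proof -
    have "{b\<in>insert c X-{a}. P a b} = {b\<in>X-{a}. P a b} \<union> (if P a c then {c} else {})"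
      using that insert(2) by auto
    then show ?thesis using insert(1,2) by (simp add: card_insert_if)
  qed
  have e0: "{b\<in>insert c X-{c}. P c b} = {b\<in>X. P c b}" using insert(2) by auto
  have "(\<Sum>a\<in>insert c X. card {b\<in>insert c X-{a}. P a b})
      = card {b\<in>X. P c b} + (\<Sum>a\<in>X. card {b\<in>insert c X-{a}. P a b})"
    unfolding sum.insert[OF insert(1,2)] e0 by (rule refl)
  also have "(\<Sum>a\<in>X. card {b\<in>insert c X-{a}. P a b})
     = (\<Sum>a\<in>X. card {b\<in>X-{a}. P a b}) + (\<Sum>a\<in>X. (if P a c then 1 else 0))"
    using e1 by (simp add: sum.distrib)
  also have "(\<Sum>a\<in>X. (if P a c then 1 else 0)) = card {a\<in>X. P a c}"
    using insert(1) by (simp add: sum.If_cases Int_def)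
  finally have s: "(\<Sum>a\<in>insert c X. card {b\<in>insert c X-{a}. P a b})
      = (\<Sum>a\<in>X. card {b\<in>X-{a}. P a b}) + (card {b\<in>X. P c b} + card {a\<in>X. P a c})" by simp
  have "{a\<in>X. P a c} = X - {b\<in>X. P c b}"
    using insert(2,4) by auto
  then have "card {b\<in>X. P c b} + card {a\<in>X. P a c} = card X"
    using insert(1) by (metis (no_types, lifting) card_Diff_subset finite_subset le_add_diff_inverse mem_Collect_eq subsetI card_mono)
  then show ?case using s IH insert(1,2)
    by (cases "card X") (simp_all add: algebra_simps)
qed



definition pos :: "'a list \<Rightarrow> 'a \<Rightarrow> nat" where
  "pos r z = (LEAST i. i < length r \<and> r ! i = z)"

lemma pos_prop: assumes "z \<in> set r" shows "pos r z < length r \<and> r ! pos r z = z"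
proof -
  have "\<exists>i. i < length r \<and> r ! i = z" using assms by (simp add: in_set_conv_nth)
  then show ?thesis unfolding pos_def by (rule LeastI_ex)
qed

lemma pos_unique: assumes "distinct r" "i < length r" "r ! i = z" shows "pos r z = i"
proof -
  have "z \<in> set r" using assms(2,3) nth_mem by blast
  then have "pos r z < length r" "r ! pos r z = r ! i" using pos_prop[of z r] assms(3) by auto
  then show ?thesis using nth_eq_iff_index_eq[OF assms(1)] assms(2) by blast
qed

lemma prefers_pos:
  assumes "distinct r" "y \<in> set r" "z \<in> set r"
  shows "prefers r y z \<longleftrightarrow> pos r y < pos r z"
proof
  assume "prefers r y z"
  then obtain i j where "i < j" "j < length r" "r ! i = y" "r ! j = z" unfolding prefers_def by blast
  moreover have "i < length r" using \<open>i < j\<close> \<open>j < length r\<close> by simp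
  ultimately have "pos r y = i" "pos r z = j" using pos_unique[OF assms(1)] \<open>r ! i = y\<close> \<open>r ! j = z\<close> \<open>j < length r\<close> by auto
  then show "pos r y < pos r z" using \<open>i < j\<close> by simp
next
  assume "pos r y < pos r z"
  then show "prefers r y z" unfolding prefers_def using pos_prop[OF assms(2)] pos_prop[OF assms(3)] by blast
qed

lemma pos_inj: assumes "y \<in> set r" "z \<in> set r" "pos r y = pos r z" shows "y = z"
proof -
  have "y = r ! pos r y" using pos_prop[OF assms(1)] by simp
  also have "\<dots> = r ! pos r z" using assms(3) by simp
  also have "\<dots> = z" using pos_prop[OF assms(2)] by simp
  finally show ?thesis .
qed

lemma util_sum:
  assumes "r \<in> permutations_of_set C" "X \<subseteq> C" "finite C"
  shows "(\<Sum>y\<in>X. util r y X) = real (card X) * (real (card X) - 1) / 2"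
proof -
  have d: "distinct r" and s: "set r = C" using assms(1) by (auto simp: permutations_of_set_def)
  have fX: "finite X" using assms finite_subset by blast
  have "\<forall>a\<in>X. \<forall>b\<in>X. a \<noteq> b \<longrightarrow> (prefers r a b \<longleftrightarrow> \<not> prefers r b a)"
  proof (intro ballI impI)
    fix a b assume "a \<in> X" "b \<in> X" "a \<noteq> b"
    then have "a \<in> set r" "b \<in> set r" using assms s by auto
    moreover have "pos r a \<noteq> pos r b" using pos_inj calculation \<open>a \<noteq> b\<close> by metis
    ultimately show "(prefers r a b \<longleftrightarrow> \<not> prefers r b a)" using prefers_pos[OF d] by auto
  qed
  from sum_card_pairs[OF fX this]
  have e: "2 * (\<Sum>a\<in>X. card {b\<in>X-{a}. prefers r a b}) = card X * (card X - 1)" .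
  have "(\<Sum>y\<in>X. util r y X) = real (\<Sum>a\<in>X. card {b\<in>X-{a}. prefers r a b})"
    unfolding util_def by simp
  also have "\<dots> = real (card X * (card X - 1)) / 2"
  proof -
    have "real (2 * (\<Sum>a\<in>X. card {b\<in>X-{a}. prefers r a b})) = real (card X * (card X - 1))"
      using e by (rule arg_cong)
    then have "2 * real (\<Sum>a\<in>X. card {b\<in>X-{a}. prefers r a b}) = real (card X * (card X - 1))"
      by (simp only: of_nat_mult of_nat_numeral)
    then show ?thesis by linarith
  qed
  also have "\<dots> = real (card X) * (real (card X) - 1) / 2"
    by (cases "card X") (auto simp: algebra_simps)
  finally show ?thesis .
qed

lemma util_le:
  assumes "finite X" "y \<in> X"
  shows "util r y X \<le> real (card X) - 1"
proof -
  have c0: "{z \<in> X - {y}. prefers r y z} \<subseteq> X - {y}" by blast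
  have f: "finite (X - {y})" using assms(1) by blast
  have c1: "card {z \<in> X - {y}. prefers r y z} \<le> card (X - {y})" using card_mono[OF f c0] .
  have c2: "card (X - {y}) = card X - 1" using assms(2) by (rule card_Diff_singleton)
  have "X \<noteq> {}" using assms(2) by blast
  then have "0 < card X" using assms(1) card_gt_0_iff by blast
  then have c3: "real (card X - 1) = real (card X) - 1" by (simp add: of_nat_diff)
  have "real (card {z \<in> X - {y}. prefers r y z}) \<le> real (card X - 1)" using c1 c2 by (simp only: of_nat_le_iff)
  then show ?thesis unfolding util_def using c3 by linarith
qed

lemma util_nonneg: "util r y X \<ge> 0" unfolding util_def by simp

lemma util_top:
  assumes "r \<in> permutations_of_set C" "X \<subseteq> C" "finite C" "X \<noteq> {}"
  shows "\<exists>y\<in>X. util r y X = real (card X) - 1"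
proof -
  have d: "distinct r" and s: "set r = C" using assms(1) by (auto simp: permutations_of_set_def)
  have fX: "finite X" using assms(2,3) finite_subset by blast
  have fI: "finite (pos r ` X)" using fX by blast
  have nI: "pos r ` X \<noteq> {}" using assms(4) by blast
  have "Min (pos r ` X) \<in> pos r ` X" using Min_in[OF fI nI] .
  then obtain y where y: "y \<in> X" "pos r y = Min (pos r ` X)" by auto
  have yr: "y \<in> set r" using y(1) assms(2) s by blast
  have "{z \<in> X - {y}. prefers r y z} = X - {y}"
  proof
    show "{z \<in> X - {y}. prefers r y z} \<subseteq> X - {y}" by blast
    show "X - {y} \<subseteq> {z \<in> X - {y}. prefers r y z}"
    proof
      fix z assume z: "z \<in> X - {y}"
      have zr: "z \<in> set r" using z assms(2) s by blast
      have "pos r z \<in> pos r ` X" using z by blast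
      then have "Min (pos r ` X) \<le> pos r z" using Min_le[OF fI] by blast
      then have le: "pos r y \<le> pos r z" using y(2) by simp
      have "pos r y \<noteq> pos r z"
      proof
        assume "pos r y = pos r z"
        then have "y = z" using pos_inj[OF yr zr] by blast
        then show False using z by blast
      qed
      then have "pos r y < pos r z" using le by linarith
      then have "prefers r y z" using prefers_pos[OF d yr zr] by blast
      then show "z \<in> {z \<in> X - {y}. prefers r y z}" using z by blast
    qed
  qed
  then have "util r y X = real (card (X - {y}))" unfolding util_def by simp
  also have "\<dots> = real (card X) - 1"
  proof -
    have "0 < card X" using assms(4) fX card_gt_0_iff by blast
    moreover have "card (X - {y}) = card X - 1" using y(1) by (rule card_Diff_singleton)
    ultimately show ?thesis by (simp add: of_nat_diff)
  qed
  finally show ?thesis using y(1) by blast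
qed



lemma L1: fixes N Um :: real
  assumes "N * (real (Suc k) * real k / 2) \<le> real (Suc k) * Um" shows "N * real k / 2 \<le> Um"
proof -
  have "real (Suc k) * (N * real k / 2) \<le> real (Suc k) * Um" using assms by (simp add: algebra_simps)
  then show ?thesis by (rule mult_left_le_imp_le) simp
qed
lemma L2: fixes N Um :: real assumes "N * real k / 2 \<le> Um" "N > 0" "real k > 0" shows "Um > 0"
proof -
  have "N * real k / 2 > 0" using assms by simp
  then show ?thesis using assms by linarith
qed
lemma L3: fixes b Um :: real assumes "b * real k \<le> Um" "Um > 0" shows "real k / Um * b \<le> 1"
proof -
  have "real k / Um * b = (b * real k) / Um" by simp
  also have "\<dots> \<le> 1" using assms by simp
  finally show ?thesis .
qed
lemma L4: fixes \<rho> Um :: real assumes "real k \<le> \<rho> * Um" "Um > 0" shows "real k / Um \<le> \<rho>"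
  using assms by (simp add: pos_divide_le_eq)
lemma L5: fixes \<rho> U :: real assumes "real k \<le> \<rho> * U" "\<rho> \<ge> 0" "real k > 0" shows "U > 0"
proof (rule ccontr)
  assume "\<not> U > 0" then have "\<rho> * U \<le> 0" using assms(2) by (simp add: mult_nonneg_nonpos)
  then show False using assms by linarith
qed
lemma L6: fixes U Um :: real assumes "real k / U \<le> real k / Um" "U > 0" "Um > 0" "real k > 0" shows "Um \<le> U"
proof (rule ccontr)
  assume "\<not> Um \<le> U" then have "real k / Um < real k / U" using assms by (intro divide_strict_left_mono) auto
  then show False using assms(1) by linarith
qed

lemma f_le:
  "(\<Sum>r\<in>permutations_of_set C. min (\<rho> * b1 r * util r y X) (min (bi r) (util r y X)))
     \<le> \<rho> * Util C b1 y X"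
proof -
  have "(\<Sum>r\<in>permutations_of_set C. min (\<rho> * b1 r * util r y X) (min (bi r) (util r y X)))
     \<le> (\<Sum>r\<in>permutations_of_set C. \<rho> * (b1 r * util r y X))"
    by (intro sum_mono) auto
  also have "\<dots> = \<rho> * Util C b1 y X" unfolding Util_def by (simp add: sum_distrib_left)
  finally show ?thesis .
qed

lemma round:
  fixes C :: "'a set" and b1 bi :: "'a list \<Rightarrow> real" and k :: nat and N :: real
  assumes fC: "finite C"
    and b1nn: "\<forall>r\<in>permutations_of_set C. 0 \<le> b1 r"
    and sumb1: "(\<Sum>r\<in>permutations_of_set C. b1 r) = N" and Npos: "N > 0"
    and X: "X \<subseteq> C" and cX: "card X = Suc k" and k: "k \<ge> 1"
    and bi: "\<forall>r\<in>permutations_of_set C. b1 r * (2 * real k / N) \<le> bi r"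
    and rhoi_le: "\<forall>y\<in>X. \<rho>i \<le> rho_of C b1 bi k X y"
    and rhoi_eq: "\<rho>i = rho_of C b1 bi k X x0" and x0: "x0 \<in> X"
  shows "\<rho>i = ereal (real k / Util C b1 x0 X) \<and> (\<forall>y\<in>X. Util C b1 y X \<le> Util C b1 x0 X)
         \<and> real k / Util C b1 x0 X \<le> 2 / N"
proof -
  define P where "P = permutations_of_set C"
  define U where "U y = Util C b1 y X" for y
  define Um where "Um = Max (U ` X)"
  have fX: "finite X" using X fC finite_subset by blast
  have Xne: "X \<noteq> {}" using cX by auto
  have fP: "finite P" unfolding P_def by simp
  have Ule: "U y \<le> Um" if "y \<in> X" for y unfolding Um_def using fX that by simp
  have "Um \<in> U ` X" using fX Xne unfolding Um_def by simp
  then obtain ys where ys: "ys \<in> X" "U ys = Um" by auto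
  have Unn: "0 \<le> b1 r * util r y X" if "r \<in> P" for r y
    using b1nn that util_nonneg[of r y X] unfolding P_def by simp
  have "(\<Sum>y\<in>X. U y) = (\<Sum>r\<in>P. b1 r * (\<Sum>y\<in>X. util r y X))"
    unfolding U_def Util_def P_def by (simp add: sum_distrib_left sum.swap[of _ X])
  also have "\<dots> = (\<Sum>r\<in>P. b1 r * (real (Suc k) * real k / 2))"
    using util_sum[OF _ X fC] cX unfolding P_def by (intro sum.cong) auto
  also have "\<dots> = N * (real (Suc k) * real k / 2)"
    using sumb1 unfolding P_def by (simp only: sum_distrib_right[symmetric])
  finally have sU: "(\<Sum>y\<in>X. U y) = N * (real (Suc k) * real k / 2)" .
  have "(\<Sum>y\<in>X. U y) \<le> real (card X) * Um"
    using sum_bounded_above[of X U Um] Ule by auto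
  then have "N * (real (Suc k) * real k / 2) \<le> real (Suc k) * Um" using sU cX by simp
  then have UmA: "N * real k / 2 \<le> Um"
    by (rule L1)
  have kpos: "real k > 0" using k by simp
  have Umpos: "Um > 0" using UmA Npos kpos by (rule L2)
  have UmB: "b1 r * real k \<le> Um" if rP: "r \<in> P" for r
  proof -
    obtain yt where yt: "yt \<in> X" "util r yt X = real (card X) - 1"
      using util_top[OF rP[unfolded P_def] X fC Xne] by blast
    have "b1 r * util r yt X \<le> U yt"
      unfolding U_def Util_def
      using member_le_sum[of r P "\<lambda>r. b1 r * util r yt X"] Unn rP fP unfolding P_def by auto
    then show ?thesis using yt cX Ule[of yt] by simp
  qed
  define \<rho>s where "\<rho>s = real k / Um"
  have rs_nn: "\<rho>s \<ge> 0" unfolding \<rho>s_def using Umpos by simp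
  have rs_le: "\<rho>s \<le> 2 / N"
  proof -
    have "\<rho>s \<le> real k / (N * real k / 2)" unfolding \<rho>s_def
    proof (rule divide_left_mono)
      show "N * real k / 2 \<le> Um" by (rule UmA)
      show "0 \<le> real k" by simp
      have "N * real k / 2 > 0" using Npos kpos by simp
      then show "0 < Um * (N * real k / 2)" using Umpos by simp
    qed
    also have "\<dots> = 2 / N" using kpos by simp
    finally show ?thesis .
  qed
  have "(\<Sum>r\<in>P. min (\<rho>s * b1 r * util r ys X) (min (bi r) (util r ys X)))
        = (\<Sum>r\<in>P. \<rho>s * (b1 r * util r ys X))"
  proof (intro sum.cong refl)
    fix r assume r: "r \<in> P"
    have u0: "0 \<le> util r ys X" by (rule util_nonneg)
    have uk: "util r ys X \<le> real k" using util_le[OF fX ys(1)] cX by simp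
    have b0: "0 \<le> b1 r" using b1nn r unfolding P_def by auto
    have c1: "\<rho>s * b1 r \<le> 1" unfolding \<rho>s_def using UmB[OF r] Umpos by (rule L3)
    have "\<rho>s * b1 r * util r ys X \<le> util r ys X"
      using c1 u0 rs_nn b0 by (intro mult_left_le_one_le) auto
    moreover have "\<rho>s * b1 r * util r ys X \<le> bi r"
    proof -
      have "\<rho>s * b1 r * util r ys X \<le> (2 / N) * b1 r * real k"
        using rs_nn rs_le b0 u0 uk Npos by (intro mult_mono) (auto intro: mult_right_mono)
      also have "\<dots> \<le> bi r" using bi r unfolding P_def by (simp add: algebra_simps)
      finally show ?thesis .
    qed
    ultimately show "min (\<rho>s * b1 r * util r ys X) (min (bi r) (util r ys X)) = \<rho>s * (b1 r * util r ys X)"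
      by simp
  qed
  also have "\<dots> = \<rho>s * U ys" unfolding U_def Util_def P_def by (simp add: sum_distrib_left)
  also have "\<dots> = real k" unfolding \<rho>s_def using ys Umpos by simp
  finally have fys: "(\<Sum>r\<in>P. min (\<rho>s * b1 r * util r ys X) (min (bi r) (util r ys X))) = real k" .
  have ro_ys: "rho_of C b1 bi k X ys \<le> ereal \<rho>s"
    unfolding rho_of_def using fys rs_nn unfolding P_def by (intro Inf_lower) blast
  have ro_lb: "ereal \<rho>s \<le> rho_of C b1 bi k X y" if "y \<in> X" for y
    unfolding rho_of_def
  proof (rule Inf_greatest, clarify)
    fix \<rho> assume h: "0 \<le> \<rho>" "(\<Sum>r\<in>permutations_of_set C. min (\<rho> * b1 r * util r y X) (min (bi r) (util r y X))) = real k"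
    have "real k \<le> \<rho> * U y" using f_le[of \<rho> b1 y X bi C] h unfolding U_def by simp
    also have "\<dots> \<le> \<rho> * Um" using Ule[OF that] h(1) by (simp add: mult_left_mono)
    finally have "real k \<le> \<rho> * Um" .
    then have "real k / Um \<le> \<rho>" using Umpos by (rule L4)
    then show "ereal \<rho>s \<le> ereal \<rho>" unfolding \<rho>s_def by simp
  qed
  have ri: "\<rho>i = ereal \<rho>s"
  proof (rule order.antisym)
    show "\<rho>i \<le> ereal \<rho>s" using rhoi_le ys(1) ro_ys by (blast intro: order.trans)
    show "ereal \<rho>s \<le> \<rho>i" using ro_lb[OF x0] rhoi_eq by simp
  qed
  define S where "S = {ereal \<rho> | \<rho>. \<rho> \<ge> 0 \<and>
     (\<Sum>r\<in>permutations_of_set C. min (\<rho> * b1 r * util r x0 X) (min (bi r) (util r x0 X))) = real k}"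
  have IS: "Inf S = ereal \<rho>s" using ri rhoi_eq unfolding S_def rho_of_def by simp
  have "S \<noteq> {}"
  proof
    assume "S = {}"
    then have "Inf S = (\<infinity>::ereal)" by (simp add: top_ereal_def)
    then show False using IS by simp
  qed
  then obtain \<rho>0 where r0: "\<rho>0 \<ge> 0" "(\<Sum>r\<in>permutations_of_set C. min (\<rho>0 * b1 r * util r x0 X) (min (bi r) (util r x0 X))) = real k"
    unfolding S_def by blast
  have "real k \<le> \<rho>0 * U x0" using f_le[of \<rho>0 b1 x0 X bi C] r0 unfolding U_def by simp
  then have Ux0: "U x0 > 0" using r0(1) kpos by (rule L5)
  have "ereal (real k / U x0) \<le> Inf S" unfolding S_def
  proof (rule Inf_greatest, clarify)
    fix \<rho> assume h: "0 \<le> \<rho>" "(\<Sum>r\<in>permutations_of_set C. min (\<rho> * b1 r * util r x0 X) (min (bi r) (util r x0 X))) = real k"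
    have "real k \<le> \<rho> * U x0" using f_le[of \<rho> b1 x0 X bi C] h unfolding U_def by simp
    then have "real k / U x0 \<le> \<rho>" using Ux0 by (rule L4)
    then show "ereal (real k / U x0) \<le> ereal \<rho>" by simp
  qed
  then have "real k / U x0 \<le> real k / Um" using IS unfolding \<rho>s_def by simp
  then have "Um \<le> U x0" using Ux0 Umpos kpos by (rule L6)
  then have Ueq: "U x0 = Um" using Ule[OF x0] by simp
  show ?thesis using ri Ueq Ule rs_le unfolding \<rho>s_def U_def by auto
qed



lemma choose2_real: "real (m choose 2) = real m * (real m - 1) / 2"
proof (induction m)
  case 0 then show ?case by simp
next
  case (Suc n)
  have "(Suc n choose 2) = (n choose 1) + (n choose 2)"
    by (metis Suc_1 binomial_Suc_Suc One_nat_def)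
  then have "real (Suc n choose 2) = real n + real (n choose 2)" by simp
  then show ?case using Suc by (simp add: field_simps)
qed

lemma Xj_eq:
  assumes inj: "inj_on x {1..m}" and img: "x ` {1..m} = C" and j: "1 \<le> j"
  shows "C - x ` {1..<j} = x ` {j..m}" and "card (C - x ` {1..<j}) = m + 1 - j"
proof -
  show e: "C - x ` {1..<j} = x ` {j..m}"
  proof
    show "C - x ` {1..<j} \<subseteq> x ` {j..m}"
    proof
      fix z assume "z \<in> C - x ` {1..<j}"
      then obtain a where "a \<in> {1..m}" "z = x a" "z \<notin> x ` {1..<j}" using img by auto
      then have "a \<in> {j..m}" by (metis atLeastAtMost_iff atLeastLessThan_iff image_eqI not_le)
      then show "z \<in> x ` {j..m}" using \<open>z = x a\<close> by auto
    qed
    show "x ` {j..m} \<subseteq> C - x ` {1..<j}"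
    proof
      fix z assume "z \<in> x ` {j..m}"
      then obtain a where a: "a \<in> {j..m}" "z = x a" by auto
      have "a \<in> {1..m}" using a j by auto
      moreover have "x a \<notin> x ` {1..<j}"
      proof
        assume "x a \<in> x ` {1..<j}"
        then obtain c where "c \<in> {1..<j}" "x a = x c" by auto
        then show False using inj a j unfolding inj_on_def
          by (metis atLeastAtMost_iff atLeastLessThan_iff linorder_not_le order.trans less_imp_le)
      qed
      ultimately show "z \<in> C - x ` {1..<j}" using img a by auto
    qed
  qed
  have "{j..m} \<subseteq> {1..m}" using j by auto
  then have "inj_on x {j..m}" by (rule inj_on_subset[OF inj])
  then show "card (C - x ` {1..<j}) = m + 1 - j" unfolding e by (simp add: card_image)
qed


lemma ratio_bound:
  assumes "real k \<le> real m - 1" "m \<ge> 2"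
  shows "2 * real k / (real m * (real m - 1) / 2) \<le> 4 / real m"
proof -
  have m1: "real m - 1 > 0" using assms(2) by simp
  have m0: "real m > 0" using assms(2) by simp
  have "2 * real k / (real m * (real m - 1) / 2) = 4 * real k / (real m * (real m - 1))" by simp
  also have "\<dots> \<le> 4 * (real m - 1) / (real m * (real m - 1))"
    using assms(1) m0 m1 by (intro divide_right_mono) auto
  also have "\<dots> = 4 / real m" using m1 m0 by (simp add: field_simps)
  finally show ?thesis .
qed

lemma pay_le: "pay (ereal a) b1 bi u \<le> a * b1 * u"
  unfolding pay_def by simp

theorem mainTheorem7:
  fixes C :: "'a set" and R :: "'a list \<Rightarrow> real"
    and x :: "nat \<Rightarrow> 'a" and b :: "nat \<Rightarrow> 'a list \<Rightarrow> real" and \<rho> :: "nat \<Rightarrow> ereal"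
  assumes "finite C"
    and "is_profile C R"
    and "rmes_run C R x b \<rho>"
    and "i \<in> {1..card C div 4}"
  shows "\<rho> i = ereal (real (card C - i) / Util C (b 1) (x i) (x ` {i..card C}))
     \<and> x i \<in> x ` {i..card C}
     \<and> (\<forall>y\<in>x ` {i..card C}. Util C (b 1) y (x ` {i..card C}) \<le> Util C (b 1) (x i) (x ` {i..card C}))"
proof -
  define m where "m = card C"
  define P where "P = permutations_of_set C"
  define N where "N = real (m choose 2)"
  have ALL: "inj_on x {1..m} \<and> x ` {1..m} = C
    \<and> (\<forall>r. b 1 r = R r * N)
    \<and> (\<forall>j\<in>{1..m-2}. (\<forall>y\<in>C - x ` {1..<j}. \<rho> j \<le> rho_of C (b 1) (b j) (m - j) (C - x ` {1..<j}) y)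
       \<and> \<rho> j = rho_of C (b 1) (b j) (m - j) (C - x ` {1..<j}) (x j)
       \<and> (\<forall>r. b (Suc j) r = b j r - pay (\<rho> j) (b 1 r) (b j r) (util r (x j) (C - x ` {1..<j}))))"
    using assms(3) unfolding rmes_run_def Let_def m_def N_def by blast
  have inj: "inj_on x {1..m}" and img: "x ` {1..m} = C"
    and b1: "\<forall>r. b 1 r = R r * N" using ALL by blast+
  have rounds: "\<forall>j\<in>{1..m-2}. (\<forall>y\<in>C - x ` {1..<j}. \<rho> j \<le> rho_of C (b 1) (b j) (m - j) (C - x ` {1..<j}) y)
       \<and> \<rho> j = rho_of C (b 1) (b j) (m - j) (C - x ` {1..<j}) (x j)
       \<and> (\<forall>r. b (Suc j) r = b j r - pay (\<rho> j) (b 1 r) (b j r) (util r (x j) (C - x ` {1..<j})))"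
    using ALL by (elim conjE)
  have i1: "1 \<le> i" and i4: "4 * i \<le> m" using assms(4) unfolding m_def by auto
  have m4: "m \<ge> 4" using i1 i4 by linarith
  have Nval: "N = real m * (real m - 1) / 2" unfolding N_def by (rule choose2_real)
  have Npos: "N > 0" unfolding Nval using m4 by simp
  have Rnn: "\<forall>r\<in>P. 0 \<le> R r" and Rsum: "(\<Sum>r\<in>P. R r) = 1"
    using assms(2) unfolding is_profile_def P_def by auto
  have b1nn: "\<forall>r\<in>P. 0 \<le> b 1 r" using Rnn b1 Npos by simp
  have sumb1: "(\<Sum>r\<in>P. b 1 r) = N" using Rsum b1 by (simp add: sum_distrib_right[symmetric])
  have roundj: "\<rho> j = ereal (real (m - j) / Util C (b 1) (x j) (C - x ` {1..<j}))
      \<and> (\<forall>y\<in>C - x ` {1..<j}. Util C (b 1) y (C - x ` {1..<j}) \<le> Util C (b 1) (x j) (C - x ` {1..<j}))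
      \<and> real (m - j) / Util C (b 1) (x j) (C - x ` {1..<j}) \<le> 2 / N"
    if j1: "1 \<le> j" and ji: "j \<le> i" and bj: "\<forall>r\<in>P. b 1 r * (2 * real (m - j) / N) \<le> b j r" for j
  proof -
    have jm: "j \<in> {1..m-2}" using j1 ji i4 m4 by auto
    have XC: "C - x ` {1..<j} \<subseteq> C" by blast
    have cX: "card (C - x ` {1..<j}) = Suc (m - j)" using Xj_eq(2)[OF inj img j1] jm by auto
    have k1: "m - j \<ge> 1" using jm by auto
    have xj: "x j \<in> C - x ` {1..<j}" using Xj_eq(1)[OF inj img j1] jm by auto
    have rj: "(\<forall>y\<in>C - x ` {1..<j}. \<rho> j \<le> rho_of C (b 1) (b j) (m - j) (C - x ` {1..<j}) y)
       \<and> \<rho> j = rho_of C (b 1) (b j) (m - j) (C - x ` {1..<j}) (x j)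
       \<and> (\<forall>r. b (Suc j) r = b j r - pay (\<rho> j) (b 1 r) (b j r) (util r (x j) (C - x ` {1..<j})))"
      using rounds jm by (rule bspec)
    have r1: "\<forall>y\<in>C - x ` {1..<j}. \<rho> j \<le> rho_of C (b 1) (b j) (m - j) (C - x ` {1..<j}) y"
      using rj by (rule conjunct1)
    have r2: "\<rho> j = rho_of C (b 1) (b j) (m - j) (C - x ` {1..<j}) (x j)"
      using rj by blast
    show ?thesis
      using round[OF assms(1) b1nn[unfolded P_def] sumb1[unfolded P_def] Npos XC cX k1 bj[unfolded P_def] r1 r2 xj] .
  qed
  have inv: "\<forall>r\<in>P. b 1 r * (1 - 4 * real n / real m) \<le> b (Suc n) r" if "Suc n \<le> i" for n
    using that
  proof (induction n)
    case 0 then show ?case by simp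
  next
    case (Suc n)
    define j where "j = Suc n"
    have j1: "1 \<le> j" and ji: "j \<le> i" and j4: "4 * (n + 1) < m" using Suc.prems i4 unfolding j_def by auto
    have IH: "\<forall>r\<in>P. b 1 r * (1 - 4 * real n / real m) \<le> b j r" using Suc unfolding j_def by auto
    have jm: "j \<in> {1..m-2}" using j1 ji i4 m4 by auto
    have rb: "2 * real (m - j) / N \<le> 4 / real m" unfolding Nval using jm m4
      by (intro ratio_bound) auto
    have rb2: "4 / real m \<le> 1 - 4 * real n / real m"
    proof -
      have "real m > 0" using m4 by simp
      moreover have "4 * real (n+1) \<le> real m" using j4 by linarith
      ultimately show ?thesis by (simp add: field_simps)
    qed
    have bj: "\<forall>r\<in>P. b 1 r * (2 * real (m - j) / N) \<le> b j r"
    proof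
      fix r assume r: "r \<in> P"
      have "b 1 r * (2 * real (m - j) / N) \<le> b 1 r * (1 - 4 * real n / real m)"
        using rb rb2 b1nn r by (intro mult_left_mono) auto
      also have "\<dots> \<le> b j r" using IH r by auto
      finally show "b 1 r * (2 * real (m - j) / N) \<le> b j r" .
    qed
    define Xj where "Xj = C - x ` {1..<j}"
    define a where "a = real (m - j) / Util C (b 1) (x j) Xj"
    have RJ: "\<rho> j = ereal a" and aN: "a \<le> 2 / N" using roundj[OF j1 ji bj] unfolding a_def Xj_def by auto
    have a0: "a \<ge> 0"
    proof -
      have "\<rho> j = rho_of C (b 1) (b j) (m - j) Xj (x j)" using rounds jm unfolding Xj_def by auto
      then have "ereal a = Inf {ereal \<rho> | \<rho>. \<rho> \<ge> 0 \<and>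
         (\<Sum>r\<in>permutations_of_set C. min (\<rho> * b 1 r * util r (x j) Xj) (min (b j r) (util r (x j) Xj))) = real (m - j)}"
        using RJ unfolding rho_of_def by simp
      also have "\<dots> \<ge> 0" by (rule Inf_greatest) auto
      finally show ?thesis by simp
    qed
    show ?case
    proof
      fix r assume r: "r \<in> P"
      have step: "b (Suc j) r = b j r - pay (ereal a) (b 1 r) (b j r) (util r (x j) Xj)"
        using rounds jm RJ unfolding Xj_def by auto
      have xj: "x j \<in> Xj" using Xj_eq(1)[OF inj img j1] jm unfolding Xj_def by auto
      have fXj: "finite Xj" using assms(1) unfolding Xj_def by blast
      have cXj: "card Xj = Suc (m - j)" using Xj_eq(2)[OF inj img j1] jm unfolding Xj_def by auto
      have uk: "util r (x j) Xj \<le> real (m - j)" using util_le[OF fXj xj, of r] cXj by simp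
      have u0: "0 \<le> util r (x j) Xj" by (rule util_nonneg)
      have b0: "0 \<le> b 1 r" using b1nn r by auto
      have "pay (ereal a) (b 1 r) (b j r) (util r (x j) Xj) \<le> a * b 1 r * util r (x j) Xj" by (rule pay_le)
      also have "\<dots> \<le> (2 / N) * b 1 r * real (m - j)"
        using aN a0 b0 uk u0 Npos by (intro mult_mono) (auto intro: mult_right_mono)
      also have "\<dots> = b 1 r * (2 * real (m - j) / N)" by simp
      also have "\<dots> \<le> b 1 r * (4 / real m)" using rb b0 by (intro mult_left_mono) auto
      finally have p: "pay (ereal a) (b 1 r) (b j r) (util r (x j) Xj) \<le> b 1 r * (4 / real m)" .
      have "b 1 r * (1 - 4 * real (Suc n) / real m) = b 1 r * (1 - 4 * real n / real m) - b 1 r * (4 / real m)"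
        by (simp add: algebra_simps add_divide_distrib)
      also have "\<dots> \<le> b j r - pay (ereal a) (b 1 r) (b j r) (util r (x j) Xj)" using IH r p by fastforce
      finally show "b 1 r * (1 - 4 * real (Suc n) / real m) \<le> b (Suc (Suc n)) r"
        using step unfolding j_def by simp
    qed
  qed
  obtain n where n: "i = Suc n" using i1 by (cases i) auto
  have IHi: "\<forall>r\<in>P. b 1 r * (1 - 4 * real n / real m) \<le> b i r" using inv[of n] n by simp
  have im: "i \<in> {1..m-2}" using i1 i4 m4 by auto
  have rb: "2 * real (m - i) / N \<le> 4 / real m" unfolding Nval using im m4
    by (intro ratio_bound) auto
  have rb2: "4 / real m \<le> 1 - 4 * real n / real m"
  proof -
    have "real m > 0" using m4 by simp
    moreover have "4 * real (n+1) \<le> real m" using i4 n by simp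
    ultimately show ?thesis by (simp add: field_simps)
  qed
  have bi: "\<forall>r\<in>P. b 1 r * (2 * real (m - i) / N) \<le> b i r"
  proof
    fix r assume r: "r \<in> P"
    have "b 1 r * (2 * real (m - i) / N) \<le> b 1 r * (1 - 4 * real n / real m)"
      using rb rb2 b1nn r by (intro mult_left_mono) auto
    also have "\<dots> \<le> b i r" using IHi r by auto
    finally show "b 1 r * (2 * real (m - i) / N) \<le> b i r" .
  qed
  have XE: "C - x ` {1..<i} = x ` {i..m}" using Xj_eq(1)[OF inj img i1] .
  have xi: "x i \<in> x ` {i..m}" using im by auto
  show ?thesis using roundj[OF i1 order.refl bi] xi unfolding XE m_def by auto
qed


end
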